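(* The EndPoint mechanism $2$-approximates the optimal Nash welfare.
   Context: Two facilities are located on $[0,1]$; $n\ge1$ agents (any $n$) have locations $x_1\le\dots\le x_n$ in $[0,1]$. For facilities at $y_1,y_2$, agent $i$'s utility is $u_i=1-\min(|x_i-y_1|,|x_i-y_2|)$; the Nash welfare is $\left(\prod_i u_i\right)^{1/n}$. The EndPoint mechanism places one facility at $x_1$ and the other at $x_n$. For a mechanism $M$, the approximation ratio of the Nash welfare is the supremum over all profiles $x$ (all numbers of agents) of $\mathrm{OPT}(x)/\mathrm{NW}(M(x))$, where $\mathrm{OPT}(x)$ is the maximum Nash welfare over all placements of two facilities in $[0,1]$; $M$ "$\alpha$-approximates" if this ratio equals $\alpha$. *)

theory Defs
  imports Complex_Main
begin

definition valid_profile :: "nat \<Rightarrow> (nat \<Rightarrow> real) \<Rightarrow> bool" where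
  "valid_profile n x \<longleftrightarrow> n \<ge> 1 \<and> (\<forall>i<n. 0 \<le> x i \<and> x i \<le> 1)
      \<and> (\<forall>i j. i \<le> j \<and> j < n \<longrightarrow> x i \<le> x j)"

definition utility :: "real \<Rightarrow> real \<Rightarrow> real \<Rightarrow> real" where
  "utility xi y1 y2 = 1 - min \<bar>xi - y1\<bar> \<bar>xi - y2\<bar>"

definition nash_welfare :: "nat \<Rightarrow> (nat \<Rightarrow> real) \<Rightarrow> real \<Rightarrow> real \<Rightarrow> real" where
  "nash_welfare n x y1 y2 = root n (\<Prod>i<n. utility (x i) y1 y2)"

definition opt_nw :: "nat \<Rightarrow> (nat \<Rightarrow> real) \<Rightarrow> real" where
  "opt_nw n x = Sup {nash_welfare n x y1 y2 | y1 y2. y1 \<in> {0..1} \<and> y2 \<in> {0..1}}"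

definition endpoint_mech :: "nat \<Rightarrow> (nat \<Rightarrow> real) \<Rightarrow> real \<times> real" where
  "endpoint_mech n x = (x 0, x (n - 1))"

definition nw_ratio :: "(nat \<Rightarrow> (nat \<Rightarrow> real) \<Rightarrow> real \<times> real) \<Rightarrow> nat \<Rightarrow> (nat \<Rightarrow> real) \<Rightarrow> real" where
  "nw_ratio M n x = opt_nw n x / nash_welfare n x (fst (M n x)) (snd (M n x))"

text \<open>The approximation ratio of M equals alpha: alpha is the supremum (least upper bound)
  of the ratios over all valid profiles.\<close>

definition approximates :: "(nat \<Rightarrow> (nat \<Rightarrow> real) \<Rightarrow> real \<times> real) \<Rightarrow> real \<Rightarrow> bool" where
  "approximates M \<alpha> \<longleftrightarrow>
     (\<forall>n x. valid_profile n x \<longrightarrow> nw_ratio M n x \<le> \<alpha>) \<and>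
     (\<forall>\<beta> < \<alpha>. \<exists>n x. valid_profile n x \<and> \<beta> < nw_ratio M n x)"

end

theory Submission
  imports Defs
begin

lemma util_bounds:
  assumes "0 \<le> a" "a \<le> 1" "0 \<le> y1" "y1 \<le> 1" "0 \<le> y2" "y2 \<le> 1"
  shows "0 \<le> utility a y1 y2 \<and> utility a y1 y2 \<le> 1"
  using assms unfolding utility_def by (auto simp: min_def abs_if)

lemma nw_le1:
  assumes "valid_profile n x" "y1 \<in> {0..1}" "y2 \<in> {0..1}"
  shows "nash_welfare n x y1 y2 \<le> 1"
proof -
  have "(\<Prod>i<n. utility (x i) y1 y2) \<le> (\<Prod>i<n. 1)"
    apply (rule prod_mono) using assms util_bounds unfolding valid_profile_def by auto
  then have "(\<Prod>i<n. utility (x i) y1 y2) \<le> 1" by simp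
  moreover have "n > 0" using assms unfolding valid_profile_def by auto
  ultimately show ?thesis unfolding nash_welfare_def
    by (metis real_root_le_iff real_root_one)
qed

lemma opt_le1:
  assumes "valid_profile n x"
  shows "opt_nw n x \<le> 1"
  unfolding opt_nw_def
  apply (rule cSup_least)
  using nw_le1[OF assms] by force+

lemma opt_ge:
  assumes "valid_profile n x" "y1 \<in> {0..1}" "y2 \<in> {0..1}"
  shows "nash_welfare n x y1 y2 \<le> opt_nw n x"
  unfolding opt_nw_def
  apply (rule cSup_upper)
  using assms nw_le1[OF assms(1)] by (auto simp: bdd_above_def)

lemma end_ge:
  assumes "valid_profile n x"
  shows "1/2 \<le> nash_welfare n x (x 0) (x (n-1))"
proof -
  have n: "n > 0" using assms unfolding valid_profile_def by auto
  have "(\<Prod>i<n. (1/2::real)) \<le> (\<Prod>i<n. utility (x i) (x 0) (x (n-1)))"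
  proof (rule prod_mono)
    fix i assume "i \<in> {..<n}"
    then have "i < n" by simp
    then have "x 0 \<le> x i" "x i \<le> x (n-1)" "0 \<le> x 0" "x (n-1) \<le> 1"
      using assms n unfolding valid_profile_def by auto
    then show "0 \<le> (1/2::real) \<and> 1/2 \<le> utility (x i) (x 0) (x (n-1))"
      unfolding utility_def by (auto simp: min_def abs_if)
  qed
  then have "(1/2)^n \<le> (\<Prod>i<n. utility (x i) (x 0) (x (n-1)))" by simp
  then have "root n ((1/2)^n) \<le> nash_welfare n x (x 0) (x (n-1))"
    unfolding nash_welfare_def using n by simp
  then show ?thesis using n by (simp add: real_root_power_cancel)
qed

definition prof :: "nat \<Rightarrow> nat \<Rightarrow> real" where
  "prof n i = (if i = 0 then 0 else if i = n - 1 then 1 else 1/2)"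

lemma prof_valid: "n \<ge> 3 \<Longrightarrow> valid_profile n (prof n)"
  unfolding valid_profile_def prof_def by auto

lemma prod_split:
  assumes "(n::nat) \<ge> 3"
  shows "(\<Prod>i<n. f i) = f 0 * f (n-1) * (\<Prod>i\<in>{1..<n-1}. (f i::real))"
proof -
  have e: "{..<n} = insert 0 (insert (n-1) {1..<n-1})" using assms by auto
  have "(\<Prod>i<n. f i) = (\<Prod>i\<in>insert 0 (insert (n-1) {1..<n-1}). f i)" by (simp only: e)
  also have "\<dots> = f 0 * (\<Prod>i\<in>insert (n-1) {1..<n-1}. f i)"
    by (rule prod.insert) (use assms in auto)
  also have "(\<Prod>i\<in>insert (n-1) {1..<n-1}. f i) = f (n-1) * (\<Prod>i\<in>{1..<n-1}. f i)"
    by (rule prod.insert) (use assms in auto)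
  finally show ?thesis by (simp add: mult.assoc)
qed

lemma prof_ratio:
  assumes "n \<ge> 3"
  shows "nw_ratio endpoint_mech n (prof n) \<ge> 2 / root n 8"
proof -
  have n: "n > 0" using assms by auto
  have p1: "(\<Prod>i<n. utility (prof n i) 0 (1/2)) = 1/2"
    using assms by (simp add: prod_split prof_def utility_def)
  have p2: "(\<Prod>i<n. utility (prof n i) (prof n 0) (prof n (n-1))) = (1/2)^(n-2)"
    using assms by (simp add: prod_split prof_def utility_def numeral_2_eq_2)
  have o: "root n (1/2) \<le> opt_nw n (prof n)"
    using opt_ge[OF prof_valid[OF assms], of 0 "1/2"] p1 by (simp add: nash_welfare_def)
  have e: "nash_welfare n (prof n) (prof n 0) (prof n (n-1)) = root n ((1/2)^(n-2))"
    using p2 by (simp add: nash_welfare_def)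
  have epos: "root n ((1/2)^(n-2)) > 0" using n by simp
  have "root n (1/2) / root n ((1/2)^(n-2)) = root n ((1/2) / (1/2)^(n-2))"
    by (rule real_root_divide[symmetric])
  also have "(1/2::real) / (1/2)^(n-2) = 2^n / 8"
  proof -
    define k where "k = n - 2"
    have k: "n = k + 2" using assms unfolding k_def by simp
    have "(2::real)^n = 2^(n-2) * 4" unfolding k by (simp add: power_add)
    then show ?thesis by (simp add: power_divide field_simps)
  qed
  also have "root n (2^n / 8) = 2 / root n 8"
    using n by (simp add: real_root_divide real_root_power_cancel)
  finally have eq: "root n (1/2) / root n ((1/2)^(n-2)) = 2 / root n 8" .
  have "2 / root n 8 \<le> opt_nw n (prof n) / root n ((1/2)^(n-2))"
    using o epos eq by (metis divide_right_mono less_imp_le)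
  then show ?thesis unfolding nw_ratio_def endpoint_mech_def using e by simp
qed

theorem theorem14:
  shows "approximates endpoint_mech 2"
  unfolding approximates_def
proof (intro conjI allI impI)
  fix n x assume v: "valid_profile n x"
  have e: "1/2 \<le> nash_welfare n x (x 0) (x (n-1))" by (rule end_ge[OF v])
  have o: "opt_nw n x \<le> 1" by (rule opt_le1[OF v])
  have "opt_nw n x / nash_welfare n x (x 0) (x (n-1)) \<le> 1 / (1/2)"
    using e o by (intro frac_le) auto
  then show "nw_ratio endpoint_mech n x \<le> 2"
    unfolding nw_ratio_def endpoint_mech_def by simp
next
  fix \<beta> :: real assume b: "\<beta> < 2"
  show "\<exists>n x. valid_profile n x \<and> \<beta> < nw_ratio endpoint_mech n x"
  proof (cases "\<beta> \<le> 0")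
    case True
    have "2 / root 3 8 > 0" by simp
    then show ?thesis using prof_valid[of 3] prof_ratio[of 3] True by force
  next
    case False
    define q where "q = 2 / \<beta>"
    have q1: "q > 1" using False b unfolding q_def by simp
    obtain m where m: "8 < q ^ m" using real_arch_pow[OF q1] by blast
    define n where "n = max m 3"
    have n3: "n \<ge> 3" unfolding n_def by simp
    have "q ^ m \<le> q ^ n" using q1 unfolding n_def by (intro power_increasing) auto
    with m have "8 < q ^ n" by simp
    then have "root n 8 < root n (q ^ n)" using n3 by simp
    also have "root n (q^n) = q" using n3 q1 by (simp add: real_root_power_cancel)
    finally have r: "root n 8 < q" .
    have rpos: "root n 8 > 0" using n3 by simp
    have "\<beta> < 2 / root n 8" using r rpos False unfolding q_def
      by (simp add: field_simps)
    then show ?thesis using prof_valid[OF n3] prof_ratio[OF n3] by force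
  qed
qed

end
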